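(* For every $d \in \{2,3,4,5,8,12,16,24,40\}$, the sequence $\left(\left\lfloor n^4/d \right\rfloor\right)_{n \ge 1}$ is eventually prime-free.
   Context: A sequence $(a_n)_{n\ge 1}$ of positive integers is called eventually prime-free if there exists an index $n_0$ such that $a_n$ is composite for all $n \ge n_0$. (Here, as in the paper, this is understood as: only finitely many terms $a_n$ are prime.) *)

theory Defs
  imports "HOL-Computational_Algebra.Primes"
begin

definition eventually_prime_free :: "(nat \<Rightarrow> nat) \<Rightarrow> bool" where
  "eventually_prime_free a \<longleftrightarrow> finite {n::nat. n \<ge> 1 \<and> prime (a n)}"

end

theory Submission
  imports Defs
begin

lemma core:
  fixes n d q t :: nat
  assumes d: "d > 0" and eq: "n^4 = d*q + t^2" and tl: "t^2 < d" and p: "prime q"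
  shows "n \<le> 2*d"
proof -
  have q0: "q > 0" using p prime_gt_0_nat by blast
  have "t^2 \<le> (n^2)^2" using eq by (simp add: power_mult[symmetric])
  hence tn: "t \<le> n^2" using power2_le_imp_le by blast
  have fac: "(n^2 - t) * (n^2 + t) = d * q"
  proof -
    have "(n^2 - t) * (n^2 + t) = (n^2)^2 - t^2"
      using tn by (simp add: power2_eq_square algebra_simps diff_mult_distrib2)
    also have "\<dots> = d*q" using eq by (simp add: power_mult[symmetric])
    finally show ?thesis .
  qed
  have "q dvd (n^2 - t) * (n^2 + t)" using fac by simp
  hence "q dvd n^2 - t \<or> q dvd n^2 + t" using p prime_dvd_mult_nat by blast
  hence "n^2 \<le> d + t"
  proof
    assume "q dvd n^2 - t"
    then obtain a where a: "n^2 - t = q*a" by blast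
    hence "q * (a * (n^2+t)) = q * d" using fac by (simp add: algebra_simps)
    hence ad: "a * (n^2+t) = d" using q0 by simp
    hence "a \<noteq> 0" using d by auto
    hence "n^2 + t \<le> d" using ad d by (metis dvd_imp_le dvd_triv_right)
    thus ?thesis by simp
  next
    assume "q dvd n^2 + t"
    then obtain b where b: "n^2 + t = q*b" by blast
    hence "q * (b * (n^2-t)) = q * d" using fac by (simp add: algebra_simps)
    hence bd: "b * (n^2-t) = d" using q0 by simp
    hence "b \<noteq> 0" using d by auto
    hence "n^2 - t \<le> d" using bd d by (metis dvd_imp_le dvd_triv_right)
    thus ?thesis by simp
  qed
  moreover have "t \<le> d" using tl by (metis le_square power2_eq_square less_imp_le order_trans)
  ultimately have "n^2 \<le> 2*d" by simp
  moreover have "n \<le> n^2" by (simp add: power2_eq_square)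
  ultimately show ?thesis by simp
qed

lemma general:
  fixes d :: nat
  assumes d: "d > 0" and sq: "\<And>r. r < d \<Longrightarrow> \<exists>t. r^4 mod d = t^2"
  shows "eventually_prime_free (\<lambda>n. n ^ 4 div d)"
  unfolding eventually_prime_free_def
proof (rule finite_subset[of _ "{..2*d}"])
  show "{n. 1 \<le> n \<and> prime (n ^ 4 div d)} \<subseteq> {..2 * d}"
  proof
    fix n assume "n \<in> {n. 1 \<le> n \<and> prime (n ^ 4 div d)}"
    hence p: "prime (n ^ 4 div d)" by simp
    have "n^4 mod d = (n mod d)^4 mod d" by (simp add: power_mod)
    then obtain t where t: "n^4 mod d = t^2" using sq[of "n mod d"] d by auto
    have eq: "n^4 = d*(n^4 div d) + t^2" using t by (metis div_mult_mod_eq mult.commute)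
    have "t^2 < d" using t d by (metis mod_less_divisor)
    from core[OF d eq this p] show "n \<in> {..2*d}" by simp
  qed
qed simp

lemma all_less_num: "(\<forall>r<(numeral k::nat). P r) = (P (numeral k - 1) \<and> (\<forall>r<numeral k - 1. P r))"
  by (metis less_Suc_eq numeral_eq_Suc diff_Suc_1)

lemma all_less_one: "(\<forall>r<(1::nat). P r) = P 0" by auto

lemma sq_set: "(x::nat) \<in> {0,1,4,9,16,25} \<Longrightarrow> \<exists>t. x = t^2"
proof -
  assume "x \<in> {0,1,4,9,16,25}"
  then consider "x = 0^2" | "x = 1^2" | "x = 2^2" | "x = 3^2" | "x = 4^2" | "x = 5^2"
    by (auto simp: power2_eq_square)
  thus ?thesis by metis
qed

lemma via_set:
  fixes d :: nat
  assumes "d > 0" "\<forall>r<d. r^4 mod d \<in> {0,1,4,9,16,25}"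
  shows "eventually_prime_free (\<lambda>n. n ^ 4 div d)"
  using general[OF assms(1)] assms(2) sq_set by blast

theorem theorem3:
  fixes d :: nat
  assumes "d \<in> {2,3,4,5,8,12,16,24,40}"
  shows "eventually_prime_free (\<lambda>n. n ^ 4 div d)"
  using assms
  apply (simp only: insert_iff empty_iff simp_thms)
  apply (elim disjE)
  by (hypsubst, rule via_set, simp, simp add: all_less_num all_less_one)+

end
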